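(* Let $m\ge 2$ and let $\mathbf A$ be the $(2m-2)\times(2m-2)$ replacement matrix defined in the context. Define the vector $\mathbf v=(v_1,\dots,v_{2m-2})^T$ by $$v_i=\frac{i}{m(m+1)(H_m-1)}\quad (1\le i\le m),\qquad v_{m+j}=\frac{1}{m(m+1)(H_m-1)}\cdot\frac{m(m+1)}{j+2}\quad (1\le j\le m-2),$$ where $H_m=\sum_{r=1}^m 1/r$. Then $\mathbf A^T\mathbf v=\mathbf v$ and $\sum_{i=1}^{2m-2}v_i=1$. Moreover the eigenvalue $1$ is the eigenvalue of $\mathbf A^T$ of largest real part, its eigenspace is one-dimensional, and $\mathbf v$ is the unique eigenvector of $\mathbf A^T$ for eigenvalue $1$ whose components sum to $1$.
   Context: Fix an integer $m\ge 2$. Rows and columns of $\mathbf A$ are indexed by $1,\dots,2m-2$; entry $A_{r,c}$ is the net number of balls of color $c$ added when a ball of color $r$ is drawn. For $m=2$, $\mathbf A=\begin{pmatrix}-1&2\\1&0\end{pmatrix}$. For $m\ge 3$, all entries of $\mathbf A$ are $0$ except: row $1$: $A_{1,1}=-1$, $A_{1,m+1}=2$; row $i$ for $2\le i\le m$: $A_{i,i}=-i$, $A_{i,i-1}=i-1$, $A_{i,m+1}=2$; row $m+i-1$ for $2\le i\le m-2$: $A_{m+i-1,m+i-1}=-i$, $A_{m+i-1,m+i}=i+1$; row $2m-2$: $A_{2m-2,2m-2}=-(m-1)$, $A_{2m-2,m}=m$. (Every row sums to $1$.) $H_m=\sum_{r=1}^m 1/r$ denotes the $m$-th harmonic numbe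r. *)

theory Defs
  imports "Jordan_Normal_Form.Char_Poly"
begin

text \<open>Entry A_{r,c} of the replacement matrix (1-based indices r, c in 1..2m-2).\<close>
definition rep_entry :: "nat \<Rightarrow> nat \<Rightarrow> nat \<Rightarrow> int" where
  "rep_entry m r c =
    (if m = 2 then
       (if r = 1 \<and> c = 1 then -1 else if r = 1 \<and> c = 2 then 2
        else if r = 2 \<and> c = 1 then 1 else 0)
     else if r = 1 then
       (if c = 1 then -1 else if c = m + 1 then 2 else 0)
     else if 2 \<le> r \<and> r \<le> m then
       (if c = r then - int r else if c = r - 1 then int r - 1
        else if c = m + 1 then 2 else 0)
     else if m + 1 \<le> r \<and> r \<le> 2 * m - 3 then
       (let i = r + 1 - m in
        if c = r then - int i else if c = r + 1 then int i + 1 else 0)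
     else if r = 2 * m - 2 then
       (if c = r then - (int m - 1) else if c = m then int m else 0)
     else 0)"

definition repA :: "nat \<Rightarrow> complex mat" where
  "repA m = mat (2 * m - 2) (2 * m - 2)
      (\<lambda>(i, j). of_int (rep_entry m (i + 1) (j + 1)))"

definition harm :: "nat \<Rightarrow> real" where
  "harm m = (\<Sum>r = 1..m. 1 / real r)"

definition vcomp :: "nat \<Rightarrow> nat \<Rightarrow> real" where
  "vcomp m i =
    (if i \<le> m then real i / (real m * (real m + 1) * (harm m - 1))
     else (1 / (real m * (real m + 1) * (harm m - 1)))
          * (real m * (real m + 1) / (real (i - m) + 2)))"

definition vvec :: "nat \<Rightarrow> complex vec" where
  "vvec m = vec (2 * m - 2) (\<lambda>i. complex_of_real (vcomp m (i + 1)))"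

end

theory Submission
  imports Defs
begin


lemma colsum:
  assumes "w \<in> carrier_vec (2*m-2)" "c < 2*m-2"
  shows "(transpose_mat (repA m) *\<^sub>v w) $ c = (\<Sum>r<2*m-2. of_int (rep_entry m (r+1) (c+1)) * w $ r)"
  using assms unfolding repA_def
  by (simp add: scalar_prod_def row_def lessThan_atLeast0 col_def)

lemma sum_two:
  assumes "finite S" "a \<in> S" "b \<in> S" "a \<noteq> b" "\<And>r. r \<in> S \<Longrightarrow> r \<noteq> a \<Longrightarrow> r \<noteq> b \<Longrightarrow> f r = 0"
  shows "sum f S = f a + f b"
proof -
  have "sum f S = sum f {a,b}"
    by (rule sum.mono_neutral_right) (use assms in auto)
  then show ?thesis using assms by simp
qed

lemma sum_three:
  assumes "finite S" "a \<in> S" "b \<in> S" "d \<in> S" "a \<noteq> b" "a \<noteq> d" "b \<noteq> d"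
    "\<And>r. r \<in> S \<Longrightarrow> r \<noteq> a \<Longrightarrow> r \<noteq> b \<Longrightarrow> r \<noteq> d \<Longrightarrow> f r = 0"
  shows "sum f S = f a + f b + f d"
proof -
  have "sum f S = sum f {a,b,d}"
    by (rule sum.mono_neutral_right) (use assms in auto)
  then show ?thesis using assms by (simp add: add.assoc)
qed

lemma col1: assumes "m \<ge> 3" "w \<in> carrier_vec (2*m-2)" "c \<le> m - 2"
  shows "(transpose_mat (repA m) *\<^sub>v w) $ c = - of_nat (c+1) * w$c + of_nat (c+1) * w$(c+1)"
proof -
  have "(transpose_mat (repA m) *\<^sub>v w) $ c = (\<Sum>r<2*m-2. of_int (rep_entry m (r+1) (c+1)) * w $ r)"
    using assms by (intro colsum) auto
  also have "\<dots> = of_int (rep_entry m (c+1) (c+1)) * w $ c + of_int (rep_entry m (c+1+1) (c+1)) * w $ (c+1)"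
    by (rule sum_two) (use assms in \<open>auto simp: rep_entry_def Let_def\<close>)
  also have "rep_entry m (c+1) (c+1) = - int (c+1)" using assms by (auto simp: rep_entry_def)
  also have "rep_entry m (c+1+1) (c+1) = int (c+1)" using assms by (auto simp: rep_entry_def)
  also have "of_int (- int (c + 1)) * w $ c + of_int (int (c + 1)) * w $ (c + 1) =
     - of_nat (c+1) * w$c + of_nat (c+1) * w$(c+1)" by simp
  finally show ?thesis .
qed

lemma col2: assumes "m \<ge> 3" "w \<in> carrier_vec (2*m-2)"
  shows "(transpose_mat (repA m) *\<^sub>v w) $ (m-1) = - of_nat m * w$(m-1) + of_nat m * w$(2*m-3)"
proof -
  have "(transpose_mat (repA m) *\<^sub>v w) $ (m-1) = (\<Sum>r<2*m-2. of_int (rep_entry m (r+1) (m-1+1)) * w $ r)"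
    using assms by (intro colsum) auto
  also have "\<dots> = of_int (rep_entry m (m-1+1) (m-1+1)) * w $ (m-1) + of_int (rep_entry m (2*m-3+1) (m-1+1)) * w $ (2*m-3)"
    by (rule sum_two) (use assms in \<open>auto simp: rep_entry_def Let_def\<close>)
  also have "rep_entry m (m-1+1) (m-1+1) = - int m" using assms by (auto simp: rep_entry_def)
  also have "rep_entry m (2*m-3+1) (m-1+1) = int m" using assms by (auto simp: rep_entry_def)
  also have "of_int (- int m) * w $ (m-1) + of_int (int m) * w $ (2*m-3) =
     - of_nat m * w$(m-1) + of_nat m * w$(2*m-3)" by simp
  finally show ?thesis .
qed

lemma col4: assumes "m \<ge> 3" "w \<in> carrier_vec (2*m-2)" "m+1 \<le> c" "c \<le> 2*m-3"
  shows "(transpose_mat (repA m) *\<^sub>v w) $ c = of_nat (c+2-m) * (w$(c-1) - w$c)"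
proof -
  have "(transpose_mat (repA m) *\<^sub>v w) $ c = (\<Sum>r<2*m-2. of_int (rep_entry m (r+1) (c+1)) * w $ r)"
    using assms by (intro colsum) auto
  also have "\<dots> = of_int (rep_entry m (c-1+1) (c+1)) * w $ (c-1) + of_int (rep_entry m (c+1) (c+1)) * w $ c"
    by (rule sum_two) (use assms in \<open>auto simp: rep_entry_def Let_def\<close>)
  also have "rep_entry m (c-1+1) (c+1) = int (c+2-m)" using assms by (auto simp: rep_entry_def Let_def)
  also have "rep_entry m (c+1) (c+1) = - int (c+2-m)" using assms by (auto simp: rep_entry_def Let_def)
  also have "of_int (int (c+2-m)) * w $ (c-1) + of_int (- int (c+2-m)) * w $ c =
     of_nat (c+2-m) * (w$(c-1) - w$c)" by (simp add: algebra_simps)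
  finally show ?thesis .
qed

lemma col3: assumes "m \<ge> 3" "w \<in> carrier_vec (2*m-2)"
  shows "(transpose_mat (repA m) *\<^sub>v w) $ m = 2 * (\<Sum>r<m. w$r) - 2 * w$m"
proof -
  let ?f = "\<lambda>r. of_int (rep_entry m (r+1) (m+1)) * w $ r"
  have "(transpose_mat (repA m) *\<^sub>v w) $ m = (\<Sum>r<2*m-2. ?f r)"
    using assms by (intro colsum) auto
  also have "\<dots> = (\<Sum>r<m. ?f r) + (\<Sum>r\<in>{m..<2*m-2}. ?f r)"
    using assms by (simp add: lessThan_atLeast0 sum.atLeastLessThan_concat)
  also have "(\<Sum>r<m. ?f r) = (\<Sum>r<m. 2 * w$r)"
    by (rule sum.cong) (use assms in \<open>auto simp: rep_entry_def\<close>)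
  also have "(\<Sum>r\<in>{m..<2*m-2}. ?f r) = ?f m"
  proof -
    have "(\<Sum>r\<in>{m..<2*m-2}. ?f r) = sum ?f {m}"
      by (rule sum.mono_neutral_right) (use assms in \<open>auto simp: rep_entry_def Let_def\<close>)
    then show ?thesis by simp
  qed
  also have "rep_entry m (m+1) (m+1) = -2" using assms by (auto simp: rep_entry_def Let_def)
  also have "of_int (-2) * w $ m = - 2 * w$m" by simp
  finally show ?thesis by (simp add: sum_distrib_left)
qed



definition gg :: "nat \<Rightarrow> nat \<Rightarrow> complex" where
  "gg m i = (if i < m then of_nat (i+1) else of_nat (m*(m+1)) / of_nat (i+3-m))"

lemma aux1: "(a::complex) \<noteq> 0 \<Longrightarrow> a * (x - y) = y \<Longrightarrow> x = (a+1)/a * y"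
  by (simp add: field_simps)

lemma aux2: assumes "(a::complex) \<noteq> 0" "a + 1 \<noteq> 0" shows "(a+1)/a * (P/(a+1) * z) = P/a * z"
  by (simp add: assms(2))

lemma fwd3:
  assumes m: "m \<ge> 3" and w: "w \<in> carrier_vec (2*m-2)"
    and eq: "transpose_mat (repA m) *\<^sub>v w = w"
  shows "\<forall>i<2*m-2. w$i = gg m i * w$0"
proof -
  have s1: "\<forall>k<m. w$k = of_nat (k+1) * w$0"
  proof (intro allI impI)
    fix k assume "k < m" then show "w$k = of_nat (k+1) * w$0"
    proof (induction k)
      case 0 then show ?case by simp
    next
      case (Suc k)
      then have IH: "w$k = of_nat (k+1) * w$0" by simp
      have "k \<le> m - 2" using Suc by simp
      from col1[OF m w this] eq
      have "- of_nat (k+1) * w$k + of_nat (k+1) * w$(k+1) = w$k" by simp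
      then have "of_nat (k+1) * w$(k+1) = of_nat (k+1) * (of_nat (k+2) * w$0)"
        using IH by (simp add: algebra_simps)
      moreover have nz: "1 + (of_nat k::complex) \<noteq> 0" using of_nat_neq_0[of k, where 'a=complex] unfolding of_nat_Suc .
      ultimately have "w$(k+1) = of_nat (k+2) * w$0"
        by simp
      then show ?case by simp
    qed
  qed
  have s2: "w$(2*m-3) = of_nat (m+1) * w$0"
  proof -
    from col2[OF m w] eq
    have "- of_nat m * w$(m-1) + of_nat m * w$(2*m-3) = w$(m-1)" by simp
    moreover have "w$(m-1) = of_nat m * w$0"
    proof -
      have h: "m-1 < m" "m-1+1 = m" using m by auto
      show ?thesis using s1[rule_format, OF h(1)] unfolding h(2) .
    qed
    ultimately have "of_nat m * w$(2*m-3) = of_nat m * (of_nat (m+1) * w$0)"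
      by (simp add: algebra_simps)
    then show ?thesis using m by simp
  qed
  have s3: "\<forall>d. d \<le> m-3 \<longrightarrow> w$(2*m-3-d) = of_nat (m*(m+1)) / of_nat (m-d) * w$0"
  proof (intro allI)
    fix d show "d \<le> m-3 \<longrightarrow> w$(2*m-3-d) = of_nat (m*(m+1)) / of_nat (m-d) * w$0"
    proof (induction d)
      case 0
      have "(of_nat (m*(m+1)) :: complex) / of_nat m = of_nat m * of_nat (m+1) / of_nat m"
        by (simp only: of_nat_mult)
      also have "\<dots> = of_nat (m+1)" by (rule nonzero_mult_div_cancel_left) (use m in simp)
      finally have h: "(of_nat (m*(m+1)) :: complex) / of_nat m = of_nat (m+1)" .
      have "2*m-3-0 = 2*m-3" "m - 0 = m" by auto
      then show ?case using s2 h by simp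
    next
      case (Suc d)
      show ?case
      proof
        assume d: "Suc d \<le> m-3"
        then have IH: "w$(2*m-3-d) = of_nat (m*(m+1)) / of_nat (m-d) * w$0" using Suc by simp
        define c where "c = 2*m-3-d"
        have c1: "m+1 \<le> c" "c \<le> 2*m-3" using d m by (auto simp: c_def)
        from col4[OF m w c1] eq
        have "of_nat (c+2-m) * (w$(c-1) - w$c) = w$c" using c1 by simp
        moreover have "c+2-m = m-1-d" "c - 1 = 2*m-3-Suc d" using d m by (auto simp: c_def)
        ultimately have E: "of_nat (m-1-d) * (w$(2*m-3-Suc d) - w$c) = w$c" by simp
        have msd: "m - Suc d = m - 1 - d" by arith
        obtain k where k: "k = m-1-d" by blast
        have md: "m-d = k+1" "k \<noteq> 0" using d m k by arith+
        have mq: "(of_nat (m - d) :: complex) = of_nat (m-1-d) + 1" "of_nat (m-1-d) \<noteq> (0::complex)"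
          unfolding k[symmetric] md(1) using md(2) by simp_all
        have "w$(2*m-3-Suc d) = (of_nat (m-1-d) + 1) / of_nat (m-1-d) * w$c"
          using aux1[OF mq(2) E] .
        also have "w$c = of_nat (m*(m+1)) / of_nat (m-d) * w$0" using IH c_def by simp
        also have "(of_nat (m-1-d) + 1) / of_nat (m-1-d) * (of_nat (m*(m+1)) / of_nat (m-d) * w$0)
             = of_nat (m*(m+1)) / of_nat (m - Suc d) * w$0"
          unfolding mq(1) msd by (rule aux2[OF mq(2)]) (use mq in simp)
        finally show "w$(2*m-3-Suc d) = of_nat (m*(m+1)) / of_nat (m - Suc d) * w$0" .
      qed
    qed
  qed
  show ?thesis
  proof (intro allI impI)
    fix i assume i: "i < 2*m-2"
    show "w$i = gg m i * w$0"
    proof (cases "i < m")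
      case True then show ?thesis using s1[rule_format, OF True] unfolding gg_def by simp
    next
      case False
      define d where "d = 2*m-3-i"
      have h: "d \<le> m-3" "2*m-3-d = i" "m - d = i+3-m" using False i m by (auto simp: d_def)
      have "w$i = of_nat (m*(m+1)) / of_nat (i+3-m) * w$0"
        using s3[rule_format, OF h(1)] unfolding h(2) h(3) .
      then show ?thesis using False unfolding gg_def by simp
    qed
  qed
qed


lemma gauss_c: "(\<Sum>r<m. of_nat (r+1) :: complex) = of_nat (m*(m+1)) / 2"
  by (induction m) (auto simp: field_simps)

lemma aux3: "-(x::complex)*(x*z) + x*((x+1)*z) = x*z"
  by (simp add: algebra_simps)

lemma aux4: assumes "(x::complex) \<noteq> 0" shows "-x*(x*z) + x*(x*(x+1)/x * z) = x*z"
proof -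
  have "x*(x+1)/x = x+1" using assms by simp
  then show ?thesis by (simp add: algebra_simps)
qed
lemma aux5: assumes "(k::complex) \<noteq> 0" "k + 1 \<noteq> 0" shows "k*(P/k*z - P/(k+1)*z) = P/(k+1)*z"
proof -
  have "P/k - P/(k+1) = (P*(k+1) - P*k)/(k*(k+1))" using assms by (simp add: diff_frac_eq)
  also have "P*(k+1) - P*k = P" by (simp add: algebra_simps)
  finally have e: "P/k - P/(k+1) = P/(k*(k+1))" .
  have "k*(P/k*z - P/(k+1)*z) = k*(P/k - P/(k+1))*z" by (simp add: algebra_simps)
  also have "\<dots> = (k * P/(k*(k+1)))*z" unfolding e by simp
  also have "k * P/(k*(k+1)) = P/(k+1)" using assms by simp
  finally show ?thesis .
qed

lemma aux6: "2 * (P/2*z) - 2 * (P/3*z) = P/3*(z::complex)"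
  by (simp add: field_simps)

lemma bwd3:
  assumes m: "m \<ge> 3" and w: "w \<in> carrier_vec (2*m-2)"
    and h: "\<forall>i<2*m-2. w$i = gg m i * w$0"
  shows "transpose_mat (repA m) *\<^sub>v w = w"
proof (rule eq_vecI)
  show "dim_vec (transpose_mat (repA m) *\<^sub>v w) = dim_vec w" using w by (simp add: repA_def)
  fix c assume "c < dim_vec w"
  then have c: "c < 2*m-2" using w by simp
  have mm: "(of_nat m :: complex) \<noteq> 0" using m by simp
  consider "c \<le> m-2" | "c = m-1" | "c = m" | "m+1 \<le> c \<and> c \<le> 2*m-3" using c m by linarith
  then show "(transpose_mat (repA m) *\<^sub>v w) $ c = w $ c"
  proof cases
    case 1
    have cc: "c < 2*m-2" "c+1 < 2*m-2" "c < m" "c+1 < m" using 1 m by auto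
    have a: "w$c = of_nat (c+1) * w$0" using h[rule_format, OF cc(1)] cc(3) unfolding gg_def by simp
    have b: "w$(c+1) = (of_nat (c+1) + 1) * w$0" using h[rule_format, OF cc(2)] cc(4) unfolding gg_def by simp
    show ?thesis unfolding col1[OF m w 1] a b by (rule aux3)
  next
    case 2
    have cc: "m-1 < 2*m-2" "m-1 < m" "m-1+1 = m" "2*m-3 < 2*m-2" "\<not> 2*m-3 < m" "2*m-3+3-m = m" using m by auto
    have a: "w$(m-1) = of_nat m * w$0" using h[rule_format, OF cc(1)] cc(2) unfolding gg_def cc(3) by simp
    have b: "w$(2*m-3) = of_nat m * (of_nat m + 1) / of_nat m * w$0"
      using h[rule_format, OF cc(4)] unfolding gg_def cc(6) if_not_P[OF cc(5)] of_nat_mult of_nat_add of_nat_1 .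
    show ?thesis unfolding 2 col2[OF m w] a b by (rule aux4[OF mm])
  next
    case 3
    have "(\<Sum>r<m. w$r) = (\<Sum>r<m. of_nat (r+1) * w$0)"
    proof (rule sum.cong)
      fix r assume "r \<in> {..<m}"
      then have "r < m" "r < 2*m-2" using m by auto
      then show "w$r = of_nat (r+1) * w$0" using h[rule_format, of r] unfolding gg_def by simp
    qed simp
    also have "\<dots> = of_nat (m*(m+1)) / 2 * w$0" by (simp only: sum_distrib_right[symmetric] gauss_c)
    finally have a: "(\<Sum>r<m. w$r) = of_nat (m*(m+1)) / 2 * w$0" .
    have cc: "m < 2*m-2" "m+3-m = 3" using m by auto
    have b: "w$m = of_nat (m*(m+1)) / 3 * w$0" using h[rule_format, OF cc(1)] unfolding gg_def cc(2) by simp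
    show ?thesis unfolding 3 col3[OF m w] a b by (rule aux6)
  next
    case 4
    obtain k where k: "k = c+2-m" by blast
    have cc: "c-1 < 2*m-2" "\<not> c-1 < m" "c-1+3-m = k" "c < 2*m-2" "\<not> c < m" "c+3-m = k+1" "k \<noteq> 0"
      using m 4 k by auto
    have a: "w$(c-1) = of_nat (m*(m+1)) / of_nat k * w$0"
      using h[rule_format, OF cc(1)] cc(2) unfolding gg_def cc(3) by simp
    have b: "w$c = of_nat (m*(m+1)) / (of_nat k + 1) * w$0"
      using h[rule_format, OF cc(4)] cc(5) unfolding gg_def cc(6) by simp
    have kk: "(of_nat k :: complex) \<noteq> 0" "(of_nat k :: complex) + 1 \<noteq> 0" using cc(7) by simp_all
       (metis of_nat_Suc of_nat_neq_0 add.commute)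
    show ?thesis unfolding col4[OF m w 4[THEN conjunct1] 4[THEN conjunct2]] k[symmetric] a b
      by (rule aux5[OF kk])
  qed
qed


lemma col_m2:
  assumes w: "w \<in> carrier_vec 2"
  shows "(transpose_mat (repA 2) *\<^sub>v w) $ 0 = - w$0 + w$1"
        "(transpose_mat (repA 2) *\<^sub>v w) $ 1 = 2 * w$0"
proof -
  have w': "w \<in> carrier_vec (2*2-2)" using w by simp
  have s2: "{..<2*2-2} = {0,1::nat}" by auto
  have "(transpose_mat (repA 2) *\<^sub>v w) $ 0 = (\<Sum>r<2*2-2. of_int (rep_entry 2 (r+1) (0+1)) * w $ r)"
    by (rule colsum[OF w']) simp
  also have "\<dots> = - w$0 + w$1" unfolding s2 by (simp add: rep_entry_def)
  finally show "(transpose_mat (repA 2) *\<^sub>v w) $ 0 = - w$0 + w$1" .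
  have "(transpose_mat (repA 2) *\<^sub>v w) $ 1 = (\<Sum>r<2*2-2. of_int (rep_entry 2 (r+1) (1+1)) * w $ r)"
    by (rule colsum[OF w']) simp
  also have "\<dots> = 2 * w$0" unfolding s2 by (simp add: rep_entry_def)
  finally show "(transpose_mat (repA 2) *\<^sub>v w) $ 1 = 2 * w$0" .
qed

lemma char_fix:
  assumes m: "m \<ge> 2" and w: "w \<in> carrier_vec (2*m-2)"
  shows "transpose_mat (repA m) *\<^sub>v w = w \<longleftrightarrow> (\<forall>i<2*m-2. w$i = gg m i * w$0)"
proof (cases "m = 2")
  case False
  then have m3: "m \<ge> 3" using m by simp
  show ?thesis
  proof
    assume "transpose_mat (repA m) *\<^sub>v w = w" then show "\<forall>i<2*m-2. w$i = gg m i * w$0" by (rule fwd3[OF m3 w])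
  next
    assume "\<forall>i<2*m-2. w$i = gg m i * w$0" then show "transpose_mat (repA m) *\<^sub>v w = w" by (rule bwd3[OF m3 w])
  qed
next
  case True
  have w2: "w \<in> carrier_vec 2" using w True by simp
  note cc = col_m2[OF w2]
  have g0: "gg 2 0 = 1" "gg 2 1 = 2" by (simp_all add: gg_def)
  show ?thesis unfolding True
  proof
    assume "transpose_mat (repA 2) *\<^sub>v w = w"
    then have "- w$0 + w$1 = w$0" using cc(1) by simp
    then have "w$1 = 2 * w$0" by (simp add: algebra_simps)
    then show "\<forall>i<2*2-2. w$i = gg 2 i * w$0" using g0 by (auto simp: less_2_cases_iff)
  next
    assume "\<forall>i<2*2-2. w$i = gg 2 i * w$0"
    from spec[OF this, of 1] have h: "w$1 = 2 * w$0" using g0 by simp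
    show "transpose_mat (repA 2) *\<^sub>v w = w"
    proof (rule eq_vecI)
      show "dim_vec (transpose_mat (repA 2) *\<^sub>v w) = dim_vec w" using w2 by (simp add: repA_def)
      fix c assume "c < dim_vec w"
      then have "c = 0 \<or> c = 1" using w2 by auto
      then show "(transpose_mat (repA 2) *\<^sub>v w) $ c = w $ c" using cc h by auto
    qed
  qed
qed


definition ggr :: "nat \<Rightarrow> nat \<Rightarrow> real" where
  "ggr m i = (if i < m then real (i+1) else real (m*(m+1)) / real (i+3-m))"

lemma gg_ggr: "gg m i = complex_of_real (ggr m i)"
  unfolding gg_def ggr_def by simp

lemma harm_split: assumes "m \<ge> 2" shows "harm m = 3/2 + (\<Sum>r=3..m. 1 / real r)"
proof -
  have e: "m = 2 + (m-2)" using assms by simp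
  have "harm m = (\<Sum>r=1..2+(m-2). 1 / real r)" unfolding harm_def using e by simp
  also have "\<dots> = (\<Sum>r=1..2. 1 / real r) + (\<Sum>r=2+1..2+(m-2). 1 / real r)"
    by (rule sum.ub_add_nat) simp
  also have "(\<Sum>r=1..2. 1 / real r) = 3/2" by (simp add: numeral_2_eq_2)
  also have "2+1 = (3::nat)" by simp
  also have "2+(m-2) = m" using assms by simp
  finally show ?thesis .
qed

lemma harm_gt: assumes "m \<ge> 2" shows "harm m - 1 > 0"
proof -
  have "(\<Sum>r=3..m. 1 / real r) \<ge> 0" by (rule sum_nonneg) simp
  then show ?thesis using harm_split[OF assms] by simp
qed

lemma gauss_r: "(\<Sum>r<m. real (r+1)) = real (m*(m+1)) / 2"
  by (induction m) (auto simp: field_simps)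

lemma reidx: fixes m :: nat and f :: "nat \<Rightarrow> 'b::comm_monoid_add" assumes "m \<ge> 2"
  shows "(\<Sum>i\<in>{m..<2*m-2}. f (i+3-m)) = (\<Sum>r=3..m. f r)"
  by (rule sum.reindex_bij_witness[where i="\<lambda>r. r+m-3" and j="\<lambda>i. i+3-m"]) (use assms in auto)

lemma ggr_sum: assumes m: "m \<ge> 2"
  shows "(\<Sum>i<2*m-2. ggr m i) = real m * (real m + 1) * (harm m - 1)"
proof -
  have sp: "(\<Sum>i<2*m-2. ggr m i) = (\<Sum>i<m. ggr m i) + (\<Sum>i\<in>{m..<2*m-2}. ggr m i)"
    using m by (simp add: lessThan_atLeast0 sum.atLeastLessThan_concat)
  have "(\<Sum>i<m. ggr m i) = (\<Sum>i<m. real (i+1))"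
    by (rule sum.cong) (auto simp: ggr_def)
  also have "\<dots> = real (m*(m+1)) / 2" by (rule gauss_r)
  finally have a: "(\<Sum>i<m. ggr m i) = real m * (real m + 1) / 2" by (simp add: algebra_simps)
  have "(\<Sum>i\<in>{m..<2*m-2}. ggr m i) = (\<Sum>i\<in>{m..<2*m-2}. real (m*(m+1)) * (1 / real (i+3-m)))"
    by (rule sum.cong) (auto simp: ggr_def)
  also have "\<dots> = real (m*(m+1)) * (\<Sum>i\<in>{m..<2*m-2}. 1 / real (i+3-m))"
    by (simp add: sum_distrib_left)
  also have "(\<Sum>i\<in>{m..<2*m-2}. 1 / real (i+3-m)) = (\<Sum>r=3..m. 1 / real r)"
    by (rule reidx[OF m])
  also have "(\<Sum>r=3..m. 1 / real r) = harm m - 3/2" using harm_split[OF m] by simp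
  finally have b: "(\<Sum>i\<in>{m..<2*m-2}. ggr m i) = real m * (real m + 1) * (harm m - 3/2)" by (simp add: algebra_simps)
  show ?thesis unfolding sp a b by (simp add: algebra_simps)
qed

definition KK :: "nat \<Rightarrow> real" where
  "KK m = 1 / (real m * (real m + 1) * (harm m - 1))"

lemma vcomp_ggr: assumes m: "m \<ge> 2" and i: "i < 2*m-2"
  shows "vcomp m (i+1) = KK m * ggr m i"
proof (cases "i < m")
  case True then show ?thesis unfolding vcomp_def ggr_def KK_def by simp
next
  case False
  have e: "i+3-m = (i+1-m)+2" using False by simp
  have e2: "real (i+3-m) = real (i+1-m) + 2" unfolding e by simp
  have "vcomp m (i+1) = (1 / (real m * (real m + 1) * (harm m - 1))) * (real m * (real m + 1) / (real (i+1-m) + 2))"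
    unfolding vcomp_def using False by simp
  also have "\<dots> = KK m * ggr m i" unfolding KK_def ggr_def e2[symmetric]
    by (simp only: if_not_P[OF False] of_nat_mult of_nat_add of_nat_1)
  finally show ?thesis .
qed

lemma vvec_gg: assumes m: "m \<ge> 2" and i: "i < 2*m-2"
  shows "vvec m $ i = complex_of_real (KK m) * gg m i"
  unfolding vvec_def gg_ggr using i vcomp_ggr[OF m i] by simp

lemma vvec_sum: assumes m: "m \<ge> 2"
  shows "(\<Sum>i<2*m-2. vvec m $ i) = 1"
proof -
  have "(\<Sum>i<2*m-2. vvec m $ i) = (\<Sum>i<2*m-2. complex_of_real (KK m * ggr m i))"
    by (rule sum.cong) (use m vvec_gg gg_ggr in auto)
  also have "\<dots> = complex_of_real (KK m * (\<Sum>i<2*m-2. ggr m i))"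
    by (simp add: sum_distrib_left)
  also have "KK m * (\<Sum>i<2*m-2. ggr m i) = 1"
    unfolding ggr_sum[OF m] KK_def using harm_gt[OF m] m by simp
  finally show ?thesis by simp
qed


lemma rep_offdiag: "r \<noteq> c \<Longrightarrow> rep_entry m r c \<ge> 0"
  unfolding rep_entry_def Let_def by auto

lemma rep_diag: "m \<ge> 1 \<Longrightarrow> rep_entry m r r \<ge> - int m"
  unfolding rep_entry_def Let_def by auto

lemma rowsum: assumes m: "m \<ge> 2" and r: "r < 2*m-2"
  shows "(\<Sum>c<2*m-2. rep_entry m (r+1) (c+1)) = 1"
proof (cases "m = 2")
  case True
  have s2: "{..<2*2-2} = {0,1::nat}" by auto
  have "r = 0 \<or> r = 1" using r True by auto
  moreover have "(\<Sum>c<2*m-2. rep_entry m (r+1) (c+1)) = rep_entry 2 (r+1) 1 + rep_entry 2 (r+1) 2"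
    unfolding True s2 by (simp add: numeral_2_eq_2)
  ultimately show ?thesis by (auto simp: rep_entry_def)
next
  case False
  then have m3: "m \<ge> 3" using m by simp
  let ?f = "\<lambda>c. rep_entry m (r+1) (c+1)"
  consider "r = 0" | "1 \<le> r \<and> r \<le> m-1" | "m \<le> r \<and> r \<le> 2*m-4" | "r = 2*m-3" using r m3 by linarith
  then show ?thesis
  proof cases
    case 1
    have "sum ?f {..<2*m-2} = ?f 0 + ?f m"
      by (rule sum_two) (use m3 1 in \<open>auto simp: rep_entry_def\<close>)
    also have "?f 0 = -1" using m3 1 by (simp add: rep_entry_def)
    also have "?f m = 2" using m3 1 by (simp add: rep_entry_def)
    finally show ?thesis by simp
  next
    case 2
    have "sum ?f {..<2*m-2} = ?f (r-1) + ?f r + ?f m"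
      by (rule sum_three) (use m3 2 in \<open>auto simp: rep_entry_def\<close>)
    also have "?f (r-1) = int r" using m3 2 by (auto simp: rep_entry_def)
    also have "?f r = - int (r+1)" using m3 2 by (auto simp: rep_entry_def)
    also have "?f m = 2" using m3 2 by (auto simp: rep_entry_def)
    finally show ?thesis by simp
  next
    case 3
    have "sum ?f {..<2*m-2} = ?f r + ?f (r+1)"
      by (rule sum_two) (use m3 3 in \<open>auto simp: rep_entry_def Let_def\<close>)
    also have "?f r = - int (r+2-m)" using m3 3 by (auto simp: rep_entry_def Let_def)
    also have "?f (r+1) = int (r+2-m) + 1" using m3 3 by (auto simp: rep_entry_def Let_def)
    finally show ?thesis by simp
  next
    case 4
    have "sum ?f {..<2*m-2} = ?f (m-1) + ?f r"
      by (rule sum_two) (use m3 4 in \<open>auto simp: rep_entry_def Let_def\<close>)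
    also have "?f (m-1) = int m" using m3 4 by (auto simp: rep_entry_def Let_def)
    also have "?f r = - (int m - 1)" using m3 4 by (auto simp: rep_entry_def Let_def)
    finally show ?thesis by simp
  qed
qed



lemma re_bound:
  assumes m: "m \<ge> 2" and ev: "eigenvalue (transpose_mat (repA m)) z" and z1: "z \<noteq> 1"
  shows "Re z < 1"
proof -
  let ?A = "transpose_mat (repA m)"
  define n where "n = 2*m-2"
  have dA: "dim_row ?A = n" unfolding repA_def n_def by simp
  obtain w where ew: "eigenvector ?A w z" using ev unfolding eigenvalue_def by blast
  then have w: "w \<in> carrier_vec n" and w0: "w \<noteq> 0\<^sub>v n" and wz: "?A *\<^sub>v w = z \<cdot>\<^sub>v w"
    unfolding eigenvector_def dA by auto
  have w': "w \<in> carrier_vec (2*m-2)" using w n_def by simp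
  define E where "E r c = real_of_int (rep_entry m (r+1) (c+1))" for r c
  define B where "B r c = E r c + (if r = c then real m else 0)" for r c
  have Bnn: "B r c \<ge> 0" for r c
  proof (cases "r = c")
    case True
    have "rep_entry m (r+1) (r+1) \<ge> - int m" by (rule rep_diag) (use m in simp)
    then show ?thesis unfolding B_def E_def True by simp
  next
    case False
    have "rep_entry m (r+1) (c+1) \<ge> 0" by (rule rep_offdiag) (use False in simp)
    then show ?thesis unfolding B_def E_def using False by simp
  qed
  have Brow: "(\<Sum>c<n. B r c) = 1 + real m" if r: "r < n" for r
  proof -
    have "(\<Sum>c<n. B r c) = (\<Sum>c<n. E r c) + (\<Sum>c<n. if r = c then real m else 0)"
      unfolding B_def by (rule sum.distrib)
    also have "(\<Sum>c<n. if r = c then real m else 0) = real m" using r by simp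
    also have "(\<Sum>c<n. E r c) = real_of_int (\<Sum>c<n. rep_entry m (r+1) (c+1))"
      unfolding E_def by simp
    also have "(\<Sum>c<n. rep_entry m (r+1) (c+1)) = 1" unfolding n_def
      by (rule rowsum[OF m]) (use r n_def in simp)
    finally show ?thesis by simp
  qed
  have colz: "(z + of_nat m) * w$c = (\<Sum>r<n. complex_of_real (B r c) * w$r)" if c: "c < n" for c
  proof -
    have "z * w$c = (?A *\<^sub>v w) $ c" using wz w c by simp
    also have "\<dots> = (\<Sum>r<n. of_int (rep_entry m (r+1) (c+1)) * w $ r)"
      unfolding n_def by (rule colsum[OF w']) (use c n_def in simp)
    finally have a: "z * w$c = (\<Sum>r<n. of_int (rep_entry m (r+1) (c+1)) * w $ r)" .
    have "(\<Sum>r<n. complex_of_real (B r c) * w$r)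
        = (\<Sum>r<n. of_int (rep_entry m (r+1) (c+1)) * w $ r + (if r = c then of_nat m * w$r else 0))"
      by (rule sum.cong) (auto simp: B_def E_def distrib_right)
    also have "\<dots> = (\<Sum>r<n. of_int (rep_entry m (r+1) (c+1)) * w $ r) + (\<Sum>r<n. if r = c then of_nat m * w$r else 0)"
      by (rule sum.distrib)
    also have "(\<Sum>r<n. if r = c then of_nat m * w$r else 0) = of_nat m * w$c" using c by simp
    finally show ?thesis using a by (simp add: distrib_right)
  qed
  have nb: "cmod (z + of_nat m) * cmod (w$c) \<le> (\<Sum>r<n. B r c * cmod (w$r))" if c: "c < n" for c
  proof -
    have "cmod (z + of_nat m) * cmod (w$c) = cmod ((z + of_nat m) * w$c)" by (simp add: norm_mult)
    also have "\<dots> = cmod (\<Sum>r<n. complex_of_real (B r c) * w$r)" using colz[OF c] by simp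
    also have "\<dots> \<le> (\<Sum>r<n. cmod (complex_of_real (B r c) * w$r))" by (rule norm_sum)
    also have "\<dots> = (\<Sum>r<n. B r c * cmod (w$r))"
      by (rule sum.cong) (auto simp: norm_mult Bnn)
    finally show ?thesis .
  qed
  define S where "S = (\<Sum>r<n. cmod (w$r))"
  have "(\<Sum>c<n. cmod (z + of_nat m) * cmod (w$c)) \<le> (\<Sum>c<n. \<Sum>r<n. B r c * cmod (w$r))"
    by (rule sum_mono) (use nb in simp)
  also have "\<dots> = (\<Sum>r<n. \<Sum>c<n. B r c * cmod (w$r))" by (rule sum.swap)
  also have "\<dots> = (\<Sum>r<n. cmod (w$r) * (\<Sum>c<n. B r c))"
    by (rule sum.cong) (auto simp: sum_distrib_left mult.commute)
  also have "\<dots> = (\<Sum>r<n. cmod (w$r) * (1 + real m))"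
    by (rule sum.cong) (auto simp: Brow)
  finally have ineq: "cmod (z + of_nat m) * S \<le> (1 + real m) * S"
    unfolding S_def by (simp add: sum_distrib_left sum_distrib_right mult.commute)
  have "\<exists>i<n. w$i \<noteq> 0"
  proof (rule ccontr)
    assume "\<not> (\<exists>i<n. w$i \<noteq> 0)"
    then have "w = 0\<^sub>v n" using w by (intro eq_vecI) auto
    then show False using w0 by simp
  qed
  then obtain i where i: "i < n" "w$i \<noteq> 0" by blast
  have "cmod (w$i) \<le> S" unfolding S_def by (rule member_le_sum) (use i in auto)
  moreover have "cmod (w$i) > 0" using i by simp
  ultimately have Spos: "S > 0" by linarith
  have nz: "cmod (z + of_nat m) \<le> 1 + real m" using ineq Spos by simp
  show ?thesis
  proof (rule ccontr)
    assume "\<not> Re z < 1"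
    then have r1: "Re z \<ge> 1" by simp
    have "Re (z + of_nat m) \<le> cmod (z + of_nat m)" by (rule complex_Re_le_cmod)
    then have "Re z \<le> 1" using nz by simp
    then have re: "Re z = 1" using r1 by simp
    have "(cmod (z + of_nat m))^2 \<le> (1 + real m)^2" by (rule power_mono[OF nz]) simp
    then have "(Re z + real m)^2 + (Im z)^2 \<le> (1 + real m)^2" unfolding cmod_power2 by simp
    then have "(Im z)^2 \<le> 0" using re by simp
    then have "Im z = 0" by simp
    then have "z = 1" using re by (simp add: complex_eq_iff)
    then show False using z1 by simp
  qed
qed

lemma fix_mult:
  assumes m: "m \<ge> 2" and w: "w \<in> carrier_vec (2*m-2)" and fw: "transpose_mat (repA m) *\<^sub>v w = w"
  shows "w = (w$0 / complex_of_real (KK m)) \<cdot>\<^sub>v vvec m"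
proof -
  have h: "\<forall>i<2*m-2. w$i = gg m i * w$0" using char_fix[OF m w] fw by blast
  have K: "KK m > 0" unfolding KK_def using harm_gt[OF m] m by simp
  show ?thesis
  proof (rule eq_vecI)
    show "dim_vec w = dim_vec ((w$0 / complex_of_real (KK m)) \<cdot>\<^sub>v vvec m)" using w by (simp add: vvec_def)
    fix i assume "i < dim_vec ((w$0 / complex_of_real (KK m)) \<cdot>\<^sub>v vvec m)"
    then have i: "i < 2*m-2" by (simp add: vvec_def)
    have "((w$0 / complex_of_real (KK m)) \<cdot>\<^sub>v vvec m) $ i = w$0 / complex_of_real (KK m) * (complex_of_real (KK m) * gg m i)"
      using i vvec_gg[OF m i] by (simp add: vvec_def)
    also have "\<dots> = gg m i * w$0" using K by simp
    also have "\<dots> = w$i" using h[rule_format, OF i] by simp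
    finally show "w $ i = ((w$0 / complex_of_real (KK m)) \<cdot>\<^sub>v vvec m) $ i" by simp
  qed
qed

theorem lemma1:
  fixes m :: nat
  assumes "m \<ge> 2"
  shows "transpose_mat (repA m) *\<^sub>v vvec m = vvec m
    \<and> (\<Sum>i<2 * m - 2. vvec m $ i) = 1
    \<and> eigenvalue (transpose_mat (repA m)) 1
    \<and> (\<forall>z. eigenvalue (transpose_mat (repA m)) z \<and> z \<noteq> 1 \<longrightarrow> Re z < 1)
    \<and> (\<forall>w. eigenvector (transpose_mat (repA m)) w 1 \<longrightarrow> (\<exists>c. w = c \<cdot>\<^sub>v vvec m))
    \<and> (\<forall>w \<in> carrier_vec (2 * m - 2).
         transpose_mat (repA m) *\<^sub>v w = w \<and> (\<Sum>i<2 * m - 2. w $ i) = 1 \<longrightarrow> w = vvec m)"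
proof -
  note m = assms
  let ?A = "transpose_mat (repA m)"
  have dA: "dim_row ?A = 2*m-2" unfolding repA_def by simp
  have vc: "vvec m \<in> carrier_vec (2*m-2)" unfolding vvec_def by simp
  have K: "KK m > 0" unfolding KK_def using harm_gt[OF m] m by simp
  have n0: "0 < 2*m-2" using m by simp
  have v0: "vvec m $ 0 = complex_of_real (KK m)" using vvec_gg[OF m n0] m by (simp add: gg_def)
  have fixv: "?A *\<^sub>v vvec m = vvec m"
  proof -
    have "\<forall>i<2*m-2. vvec m $ i = gg m i * vvec m $ 0"
      using vvec_gg[OF m] v0 by (simp add: mult.commute)
    then show ?thesis using char_fix[OF m vc] by blast
  qed
  have ev1: "eigenvector ?A (vvec m) 1"
    unfolding eigenvector_def dA
  proof (intro conjI)
    show "vvec m \<in> carrier_vec (2*m-2)" by (rule vc)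
    show "vvec m \<noteq> 0\<^sub>v (2*m-2)"
    proof
      assume "vvec m = 0\<^sub>v (2*m-2)"
      then have "vvec m $ 0 = 0" using n0 by simp
      then show False using v0 K by simp
    qed
    show "?A *\<^sub>v vvec m = 1 \<cdot>\<^sub>v vvec m" using fixv by simp
  qed
  have p5: "\<forall>w. eigenvector ?A w 1 \<longrightarrow> (\<exists>c. w = c \<cdot>\<^sub>v vvec m)"
  proof (intro allI impI)
    fix w assume "eigenvector ?A w 1"
    then have w: "w \<in> carrier_vec (2*m-2)" and fw: "?A *\<^sub>v w = w"
      unfolding eigenvector_def dA by auto
    show "\<exists>c. w = c \<cdot>\<^sub>v vvec m" using fix_mult[OF m w fw] by blast
  qed
  have p6: "\<forall>w \<in> carrier_vec (2 * m - 2).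
         ?A *\<^sub>v w = w \<and> (\<Sum>i<2 * m - 2. w $ i) = 1 \<longrightarrow> w = vvec m"
  proof (intro ballI impI)
    fix w assume w: "w \<in> carrier_vec (2*m-2)" and "?A *\<^sub>v w = w \<and> (\<Sum>i<2 * m - 2. w $ i) = 1"
    then have fw: "?A *\<^sub>v w = w" and sw: "(\<Sum>i<2 * m - 2. w $ i) = 1" by auto
    define c where "c = w$0 / complex_of_real (KK m)"
    have wc: "w = c \<cdot>\<^sub>v vvec m" using fix_mult[OF m w fw] unfolding c_def .
    have "(\<Sum>i<2 * m - 2. w $ i) = (\<Sum>i<2 * m - 2. c * vvec m $ i)"
      by (rule sum.cong) (use wc vc in auto)
    also have "\<dots> = c * (\<Sum>i<2 * m - 2. vvec m $ i)" by (simp add: sum_distrib_left)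
    also have "\<dots> = c" using vvec_sum[OF m] by simp
    finally have "c = 1" using sw by simp
    then show "w = vvec m" using wc by simp
  qed
  show ?thesis
    using fixv vvec_sum[OF m] ev1 re_bound[OF m] p5 p6 unfolding eigenvalue_def by blast
qed

end
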